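(* Let $s\ge1$, $h>0$, $q_0,p_0\in\mathbb{R}^m$, and suppose $u,v:[0,h]\to\mathbb{R}^m$ are polynomials of degree at most $s$ satisfying, for all $c\in[0,1]$, $$u(ch)=q_0+h\sum_{i=0}^{s-1}\Big(\int_0^cP_i(x)\,\mathrm{d}x\Big)\gamma_i(v),\qquad v(ch)=p_0+h\sum_{i=0}^{s-1}\Big(\int_0^cP_i(x)\,\mathrm{d}x\Big)\Big[-\eta_i(u)+\sum_{j=0}^{s-1}\rho_{ij}(u)\gamma_j(v)\Big].$$ Set $q_1=u(h)$, $p_1=v(h)$. Then $H(q_1,p_1)=H(q_0,p_0)$.
   Context: Let $U:\mathbb{R}^m\to\mathbb{R}$ be $C^1$ and $B:\mathbb{R}^m\to\mathbb{R}^{m\times m}$ continuous with $B(q)^\top=-B(q)$ for all $q$. This is a discretization of the problem $\dot q=p$, $\dot p=B(q)p-\nabla U(q)$, $q(0)=q_0$, $p(0)=p_0$ (for charged particle dynamics, $m=3$ and $B(q)p=p\times L(q)$ with $L$ the magnetic field and $-\nabla U$ the electric field), whose energy is $H(q,p)=\frac12p^\top p+U(q)$. $\{P_j\}_{j\ge0}$ is the orthonormal Legendre basis on $[0,1]$ ($\deg P_j=j$, $\int_0^1P_iP_j=\delta_{ij}$), and for a path $\sigma:[0,h]\to\mathbb{R}^m$: $\gamma_j(\sigma)=\int_0^1P_j(\tau)\sigma(\tau h)\mathrm{d}\tau$, $\eta_j(\sigma)=\int_0^1P_j(\tau)\nabla U(\sigma(\tau h))\mathrm{d}\tau$, $\rho_{ij}(\sigma)=\int_0^1P_i(\tau)P_j(\tau)B(\sigma(\tau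 h))\mathrm{d}\tau$. *)

theory Defs
  imports "HOL-Analysis.Analysis"
begin

text \<open>Orthonormal shifted Legendre polynomials on [0,1]:
  P_j(x) = sqrt(2j+1) * sum_{k=0}^j (-1)^(j+k) C(j,k) C(j+k,k) x^k.\<close>
definition legP :: "nat \<Rightarrow> real \<Rightarrow> real" where
  "legP j x = sqrt (2 * real j + 1) *
     (\<Sum>k\<le>j. (-1) ^ (j + k) * real (j choose k) * real ((j + k) choose k) * x ^ k)"

definition gammaL :: "real \<Rightarrow> nat \<Rightarrow> (real \<Rightarrow> real^'m) \<Rightarrow> real^'m" where
  "gammaL h j \<sigma> = integral {0..1} (\<lambda>\<tau>. legP j \<tau> *\<^sub>R \<sigma> (\<tau> * h))"

definition etaL :: "(real^'m \<Rightarrow> real^'m) \<Rightarrow> real \<Rightarrow> nat \<Rightarrow> (real \<Rightarrow> real^'m) \<Rightarrow> real^'m" where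
  "etaL gradU h j \<sigma> = integral {0..1} (\<lambda>\<tau>. legP j \<tau> *\<^sub>R gradU (\<sigma> (\<tau> * h)))"

definition rhoL :: "(real^'m \<Rightarrow> real^'m^'m) \<Rightarrow> real \<Rightarrow> nat \<Rightarrow> nat \<Rightarrow> (real \<Rightarrow> real^'m) \<Rightarrow> real^'m^'m" where
  "rhoL B h i j \<sigma> = integral {0..1} (\<lambda>\<tau>. (legP i \<tau> * legP j \<tau>) *\<^sub>R B (\<sigma> (\<tau> * h)))"

definition energy :: "(real^'m \<Rightarrow> real) \<Rightarrow> real^'m \<Rightarrow> real^'m \<Rightarrow> real" where
  "energy U q p = (1/2) * (p \<bullet> p) + U q"

definition poly_path_deg :: "real \<Rightarrow> nat \<Rightarrow> (real \<Rightarrow> real^'m) \<Rightarrow> bool" where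
  "poly_path_deg h s \<sigma> \<longleftrightarrow> (\<exists>c :: nat \<Rightarrow> real^'m. \<forall>t\<in>{0..h}. \<sigma> t = (\<Sum>k\<le>s. t ^ k *\<^sub>R c k))"

end

theory Submission
  imports Defs
begin

lemma skew_zero:
  fixes M :: "real^'m^'m" assumes "transpose M = - M"
  shows "x \<bullet> (M *v x) = 0"
proof -
  have "x \<bullet> (M *v x) = (x v* M) \<bullet> x" by (rule dot_lmul_matrix[symmetric])
  also have "\<dots> = (transpose M *v x) \<bullet> x" by simp
  also have "\<dots> = ((- M) *v x) \<bullet> x" using assms by simp
  also have "(- M) *v x = - (M *v x)" by (simp add: vec_eq_iff matrix_vector_mult_def sum_negf)
  also have "- (M *v x) \<bullet> x = - (x \<bullet> (M *v x))" by (simp add: inner_commute)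
  finally show ?thesis by simp
qed

lemma double_sum_skew:
  fixes M :: "real^'m^'m" and l :: "nat \<Rightarrow> real" and g :: "nat \<Rightarrow> real^'m"
  assumes "transpose M = - M"
  shows "(\<Sum>i<s. \<Sum>j<s. (l i * l j) * (g i \<bullet> (M *v g j))) = 0"
proof -
  let ?a = "\<Sum>i<s. l i *\<^sub>R g i"
  have lin: "linear (\<lambda>x. M *v x)" by (simp add: matrix_vector_mul_linear)
  have "M *v ?a = (\<Sum>j<s. l j *\<^sub>R (M *v g j))"
    by (induction s) (simp_all add: matrix_vector_right_distrib matrix_vector_mult_scaleR)
  hence "?a \<bullet> (M *v ?a) = (\<Sum>i<s. \<Sum>j<s. (l i * l j) * (g i \<bullet> (M *v g j)))"
    apply (simp add: inner_sum_left inner_sum_right sum_distrib_left mult_ac)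
    apply (subst sum.swap) apply (simp add: mult_ac)
    done
  thus ?thesis using skew_zero[OF assms] by simp
qed

lemma blin: "bounded_linear (\<lambda>M::real^'m^'m. g \<bullet> (M *v g'))"
proof -
  have "linear (\<lambda>M::real^'m^'m. g \<bullet> (M *v g'))"
    by (rule linearI) (simp_all add: matrix_vector_mult_add_rdistrib inner_add_right scaleR_matrix_vector_assoc[symmetric])
  thus ?thesis by (simp add: linear_conv_bounded_linear)
qed
theorem theorem1:
  fixes U :: "real^'m \<Rightarrow> real"
    and gradU :: "real^'m \<Rightarrow> real^'m"
    and B :: "real^'m \<Rightarrow> real^'m^'m"
    and s :: nat and h :: real
    and q0 p0 :: "real^'m"
    and u v :: "real \<Rightarrow> real^'m"
  assumes U_grad: "\<And>q. (U has_derivative (\<lambda>w. gradU q \<bullet> w)) (at q)"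
    and gradU_cont: "continuous_on UNIV gradU"
    and B_cont: "continuous_on UNIV B"
    and B_skew: "\<And>q. transpose (B q) = - B q"
    and s_ge: "s \<ge> 1"
    and h_pos: "h > 0"
    and u_poly: "poly_path_deg h s u"
    and v_poly: "poly_path_deg h s v"
    and u_eq: "\<And>c. c \<in> {0..1} \<Longrightarrow>
       u (c * h) = q0 + h *\<^sub>R (\<Sum>i<s. integral {0..c} (legP i) *\<^sub>R gammaL h i v)"
    and v_eq: "\<And>c. c \<in> {0..1} \<Longrightarrow>
       v (c * h) = p0 + h *\<^sub>R (\<Sum>i<s. integral {0..c} (legP i) *\<^sub>R
          (- etaL gradU h i u + (\<Sum>j<s. rhoL B h i j u *v gammaL h j v)))"
  shows "energy U (u h) (v h) = energy U q0 p0"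
proof -
  define I where "I i c = integral {0..c} (legP i)" for i c
  define g where "g i = gammaL h i v" for i
  define e where "e i = etaL gradU h i u" for i
  define r where "r i j = rhoL B h i j u" for i j
  define w where "w i = - e i + (\<Sum>j<s. r i j *v g j)" for i
  define Q where "Q c = q0 + h *\<^sub>R (\<Sum>i<s. I i c *\<^sub>R g i)" for c
  define Pp where "Pp c = p0 + h *\<^sub>R (\<Sum>i<s. I i c *\<^sub>R w i)" for c
  define Q' where "Q' c = h *\<^sub>R (\<Sum>i<s. legP i c *\<^sub>R g i)" for c
  define P' where "P' c = h *\<^sub>R (\<Sum>i<s. legP i c *\<^sub>R w i)" for c
  have uQ: "u (c*h) = Q c" if "c \<in> {0..1}" for c
    using u_eq[OF that] by (simp add: Q_def I_def g_def)
  have vP: "v (c*h) = Pp c" if "c \<in> {0..1}" for c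
    using v_eq[OF that] by (simp add: Pp_def I_def w_def e_def r_def g_def)
  have legc: "continuous_on A (legP i)" for i A
    unfolding legP_def by (intro continuous_intros)
  have Id: "(I i has_vector_derivative legP i c) (at c within {0..1})" if "c \<in> {0..1}" for i c
    unfolding I_def by (rule integral_has_vector_derivative[OF legc that])
  have Id': "(I i has_real_derivative legP i c) (at c within {0..1})" if "c \<in> {0..1}" for i c
    using Id[OF that] by (simp add: has_real_derivative_iff_has_vector_derivative)
  have Sd: "((\<lambda>c. \<Sum>i<s. I i c *\<^sub>R x i) has_vector_derivative (\<Sum>i<s. legP i c *\<^sub>R x i)) (at c within {0..1})" if "c \<in> {0..1}" for c x
    by (rule has_vector_derivative_sum) (rule has_vector_derivative_scaleR[OF Id'[OF that] has_vector_derivative_const, simplified])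
  have Ic: "continuous_on {0..1} (I i)" for i
    unfolding I_def by (rule indefinite_integral_continuous_1) (simp add: integrable_continuous_real legc)
  have Qd: "(Q has_vector_derivative Q' c) (at c within {0..1})" if "c \<in> {0..1}" for c
    unfolding Q_def Q'_def using has_vector_derivative_add[OF has_vector_derivative_const has_vector_derivative_scaleR[OF DERIV_const Sd[OF that, of g]]] by simp
  have Pd: "(Pp has_vector_derivative P' c) (at c within {0..1})" if "c \<in> {0..1}" for c
    unfolding Pp_def P'_def using has_vector_derivative_add[OF has_vector_derivative_const has_vector_derivative_scaleR[OF DERIV_const Sd[OF that, of w]]] by simp
  have Qc: "continuous_on {0..1} Q"
    unfolding Q_def by (intro continuous_intros Ic)
  have Pc: "continuous_on {0..1} Pp"
    unfolding Pp_def by (intro continuous_intros Ic)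
  define f where "f c = energy U (Q c) (Pp c)" for c
  define f' where "f' c = h * (\<Sum>i<s. (legP i c *\<^sub>R Pp c) \<bullet> w i) + h * (\<Sum>i<s. (legP i c *\<^sub>R gradU (Q c)) \<bullet> g i)" for c
  have fd: "(f has_vector_derivative f' c) (at c within {0..1})" if "c \<in> {0..1}" for c
  proof -
    have q: "(Q has_derivative (\<lambda>x. x *\<^sub>R Q' c)) (at c within {0..1})"
      using Qd[OF that] by (simp add: has_vector_derivative_def)
    have p: "(Pp has_derivative (\<lambda>x. x *\<^sub>R P' c)) (at c within {0..1})"
      using Pd[OF that] by (simp add: has_vector_derivative_def)
    have uq: "((\<lambda>x. U (Q x)) has_derivative (\<lambda>x. gradU (Q c) \<bullet> (x *\<^sub>R Q' c))) (at c within {0..1})"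
      by (rule has_derivative_compose[OF q U_grad])
    have pp: "((\<lambda>x. Pp x \<bullet> Pp x) has_derivative (\<lambda>x. Pp c \<bullet> (x *\<^sub>R P' c) + (x *\<^sub>R P' c) \<bullet> Pp c)) (at c within {0..1})"
      by (rule has_derivative_inner[OF p p])
    have D: "(f has_derivative (\<lambda>x. (1/2) * (Pp c \<bullet> (x *\<^sub>R P' c) + (x *\<^sub>R P' c) \<bullet> Pp c) + gradU (Q c) \<bullet> (x *\<^sub>R Q' c))) (at c within {0..1})"
      unfolding f_def energy_def
      by (intro has_derivative_add has_derivative_mult_right pp uq)
    have e1: "Pp c \<bullet> P' c = h * (\<Sum>i<s. (legP i c *\<^sub>R Pp c) \<bullet> w i)"
      by (simp add: P'_def inner_sum_right)
    have e2: "gradU (Q c) \<bullet> Q' c = h * (\<Sum>i<s. (legP i c *\<^sub>R gradU (Q c)) \<bullet> g i)"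
      by (simp add: Q'_def inner_sum_right)
    have "(1/2) * (Pp c \<bullet> (x *\<^sub>R P' c) + (x *\<^sub>R P' c) \<bullet> Pp c) + gradU (Q c) \<bullet> (x *\<^sub>R Q' c)
          = x * (Pp c \<bullet> P' c) + x * (gradU (Q c) \<bullet> Q' c)" for x
      by (simp add: inner_commute[of "P' c"])
    hence EQ: "(\<lambda>x. (1/2) * (Pp c \<bullet> (x *\<^sub>R P' c) + (x *\<^sub>R P' c) \<bullet> Pp c) + gradU (Q c) \<bullet> (x *\<^sub>R Q' c)) = (\<lambda>x. x *\<^sub>R f' c)"
      by (simp add: e1 e2 f'_def distrib_left)
    show ?thesis using D unfolding EQ by (simp add: has_vector_derivative_def)
  qed
  have ftc: "(f' has_integral (f 1 - f 0)) {0..1}"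
    by (rule fundamental_theorem_of_calculus) (auto intro: fd)
  have gi: "((\<lambda>c. legP i c *\<^sub>R Pp c) has_integral g i) {0..1}" for i
  proof -
    have "(\<lambda>c. legP i c *\<^sub>R Pp c) integrable_on {0..1}"
      by (intro integrable_continuous_real continuous_intros legc Pc)
    moreover have "integral {0..1} (\<lambda>c. legP i c *\<^sub>R Pp c) = g i"
      unfolding g_def gammaL_def by (rule integral_cong) (simp add: vP)
    ultimately show ?thesis using has_integral_integrable_integral by blast
  qed
  have gUc: "continuous_on {0..1} (\<lambda>c. gradU (Q c))"
    by (rule continuous_on_compose2[OF gradU_cont Qc]) auto
  have ei: "((\<lambda>c. legP i c *\<^sub>R gradU (Q c)) has_integral e i) {0..1}" for i
  proof -
    have "(\<lambda>c. legP i c *\<^sub>R gradU (Q c)) integrable_on {0..1}"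
      by (intro integrable_continuous_real continuous_intros legc gUc)
    moreover have "integral {0..1} (\<lambda>c. legP i c *\<^sub>R gradU (Q c)) = e i"
      unfolding e_def etaL_def by (rule integral_cong) (simp add: uQ)
    ultimately show ?thesis using has_integral_integrable_integral by blast
  qed
  have BQc: "continuous_on {0..1} (\<lambda>c. B (Q c))"
    by (rule continuous_on_compose2[OF B_cont Qc]) auto
  have ri: "((\<lambda>c. (legP i c * legP j c) *\<^sub>R B (Q c)) has_integral r i j) {0..1}" for i j
  proof -
    have "(\<lambda>c. (legP i c * legP j c) *\<^sub>R B (Q c)) integrable_on {0..1}"
      by (intro integrable_continuous_real continuous_intros legc BQc)
    moreover have "integral {0..1} (\<lambda>c. (legP i c * legP j c) *\<^sub>R B (Q c)) = r i j"
      unfolding r_def rhoL_def by (rule integral_cong) (simp add: uQ)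
    ultimately show ?thesis using has_integral_integrable_integral by blast
  qed
  have skew: "(\<Sum>i<s. \<Sum>j<s. g i \<bullet> (r i j *v g j)) = 0"
  proof -
    have "((\<lambda>c. \<Sum>i<s. \<Sum>j<s. (legP i c * legP j c) * (g i \<bullet> (B (Q c) *v g j))) has_integral
             (\<Sum>i<s. \<Sum>j<s. g i \<bullet> (r i j *v g j))) {0..1}"
    proof (intro has_integral_sum finite_lessThan)
      fix i j
      have "((\<lambda>M. g i \<bullet> (M *v g j)) \<circ> (\<lambda>c. (legP i c * legP j c) *\<^sub>R B (Q c)) has_integral g i \<bullet> (r i j *v g j)) {0..1}"
        by (rule has_integral_linear[OF ri blin])
      thus "((\<lambda>c. (legP i c * legP j c) * (g i \<bullet> (B (Q c) *v g j))) has_integral g i \<bullet> (r i j *v g j)) {0..1}"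
        by (simp add: o_def scaleR_matrix_vector_assoc[symmetric])
    qed
    moreover have "(\<lambda>c. \<Sum>i<s. \<Sum>j<s. (legP i c * legP j c) * (g i \<bullet> (B (Q c) *v g j))) = (\<lambda>c. 0)"
      by (rule ext, rule double_sum_skew[OF B_skew])
    ultimately have "((\<lambda>c. 0::real) has_integral (\<Sum>i<s. \<Sum>j<s. g i \<bullet> (r i j *v g j))) {0..1}" by simp
    thus ?thesis by (simp add: has_integral_0_eq)
  qed
  have "(f' has_integral h * (\<Sum>i<s. g i \<bullet> w i) + h * (\<Sum>i<s. e i \<bullet> g i)) {0..1}"
    unfolding f'_def
    apply (intro has_integral_add has_integral_mult_right has_integral_sum finite_lessThan)
     apply (rule has_integral_linear[OF gi bounded_linear_inner_left, unfolded o_def])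
    apply (rule has_integral_linear[OF ei bounded_linear_inner_left, unfolded o_def])
    done
  hence "f 1 - f 0 = h * (\<Sum>i<s. g i \<bullet> w i) + h * (\<Sum>i<s. e i \<bullet> g i)"
    by (rule has_integral_unique[OF ftc])
  also have "\<dots> = h * (\<Sum>i<s. \<Sum>j<s. g i \<bullet> (r i j *v g j))"
  proof -
    have "g i \<bullet> w i = - (e i \<bullet> g i) + (\<Sum>j<s. g i \<bullet> (r i j *v g j))" for i
      by (simp add: w_def inner_diff_right inner_add_right inner_sum_right inner_commute[of "g i" "e i"])
    hence "(\<Sum>i<s. g i \<bullet> w i) = - (\<Sum>i<s. e i \<bullet> g i) + (\<Sum>i<s. \<Sum>j<s. g i \<bullet> (r i j *v g j))"
      by (simp add: sum.distrib sum_negf sum_subtractf)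
    thus ?thesis by (simp add: distrib_left[symmetric])
  qed
  also have "\<dots> = 0" using skew by simp
  finally have "f 1 = f 0" by simp
  moreover have "Q 0 = q0" "Pp 0 = p0" by (simp_all add: Q_def Pp_def I_def)
  moreover have "u h = Q 1" "v h = Pp 1" using uQ[of 1] vP[of 1] by simp_all
  ultimately show ?thesis by (simp add: f_def)
qed

end
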